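(* Let $V$ be a real vector space and $C$ a cone in $V$. Assume $X_1,\dots,X_m,Y_1,\dots,Y_n$ are $C$-antichain-convex subsets of $V$, put $X=X_1+\dots+X_m$ and $Y=Y_1+\dots+Y_n$, and assume $X\cap Y=\emptyset$. (1) If $X_1$ is $C$-upward, then $\operatorname{co}(X)\cap\operatorname{co}(Y)=\emptyset$. (2) If $X_1$ is $C$-downward, then $\operatorname{co}(X)\cap\operatorname{co}(Y)=\emptyset$.
   Context: A cone in $V$ is a subset $C$ with $\lambda C\subseteq C$ for all $\lambda>0$ (possibly empty, need not contain $0$). $S\subseteq V$ is $C$-antichain-convex iff for all $x,y\in S$ and $\lambda\in[0,1]$ with $y-x\notin C\cup(-C)$ one has $\lambda x+(1-\lambda)y\in S$. $S$ is $C$-upward iff $S+C\subseteq S$; $C$-downward iff $S-C\subseteq S$. Sums are Minkowski sums; $\operatorname{co}$ denotes convex hull. *)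

theory Defs
  imports "HOL-Analysis.Analysis"
begin

definition is_cone :: "'a::real_vector set \<Rightarrow> bool" where
  "is_cone C \<longleftrightarrow> (\<forall>t::real. t > 0 \<longrightarrow> (\<forall>c\<in>C. t *\<^sub>R c \<in> C))"

definition antichain_convex :: "'a::real_vector set \<Rightarrow> 'a set \<Rightarrow> bool" where
  "antichain_convex C S \<longleftrightarrow>
     (\<forall>x\<in>S. \<forall>y\<in>S. \<forall>t::real. 0 \<le> t \<and> t \<le> 1 \<and> y - x \<notin> C \<union> uminus ` C
        \<longrightarrow> t *\<^sub>R x + (1 - t) *\<^sub>R y \<in> S)"

definition upward :: "'a::real_vector set \<Rightarrow> 'a set \<Rightarrow> bool" where
  "upward C S \<longleftrightarrow> (\<forall>s\<in>S. \<forall>c\<in>C. s + c \<in> S)"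

definition downward :: "'a::real_vector set \<Rightarrow> 'a set \<Rightarrow> bool" where
  "downward C S \<longleftrightarrow> (\<forall>s\<in>S. \<forall>c\<in>C. s - c \<in> S)"

definition minkowski_sum :: "(nat \<Rightarrow> 'a::real_vector set) \<Rightarrow> nat \<Rightarrow> 'a set" where
  "minkowski_sum A k = {(\<Sum>i\<in>{1..k}. a i) | a. \<forall>i\<in>{1..k}. a i \<in> A i}"

end

theory Submission
  imports Defs
begin

inductive_set K0 :: "'a::real_vector set \<Rightarrow> 'a set" for C :: "'a set" where
  K0_zero: "0 \<in> K0 C"
| K0_step: "c \<in> C \<Longrightarrow> (t::real) \<ge> 0 \<Longrightarrow> k \<in> K0 C \<Longrightarrow> t *\<^sub>R c + k \<in> K0 C"

lemma K0_add: "a \<in> K0 C \<Longrightarrow> b \<in> K0 C \<Longrightarrow> a + b \<in> K0 C"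
proof (induct a rule: K0.induct)
  case K0_zero then show ?case by simp
next
  case (K0_step c t k)
  then have "t *\<^sub>R c + (k + b) \<in> K0 C" by (intro K0.K0_step) auto
  then show ?case by (simp add: add.assoc)
qed

lemma K0_gen: "c \<in> C \<Longrightarrow> t \<ge> 0 \<Longrightarrow> t *\<^sub>R c \<in> K0 C"
  using K0_step[OF _ _ K0_zero] by fastforce

lemma K0_neg: "a \<in> K0 (uminus ` C) \<Longrightarrow> - a \<in> K0 C"
proof (induct a rule: K0.induct)
  case K0_zero then show ?case by (simp add: K0.K0_zero)
next
  case (K0_step c t k)
  then obtain d where d: "d \<in> C" "c = - d" by auto
  have "t *\<^sub>R d + (- k) \<in> K0 C" using K0_step d by (intro K0.K0_step) auto
  then show ?case using d by (simp add: algebra_simps)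
qed

lemma ac_neg: "antichain_convex C S \<Longrightarrow> antichain_convex (uminus ` C) S"
  unfolding antichain_convex_def
proof (intro ballI allI impI)
  fix x y and t :: real
  assume A: "\<forall>x\<in>S. \<forall>y\<in>S. \<forall>t::real. 0 \<le> t \<and> t \<le> 1 \<and> y - x \<notin> C \<union> uminus ` C
        \<longrightarrow> t *\<^sub>R x + (1 - t) *\<^sub>R y \<in> S"
    and x: "x \<in> S" and y: "y \<in> S"
    and h: "0 \<le> t \<and> t \<le> 1 \<and> y - x \<notin> uminus ` C \<union> uminus ` uminus ` C"
  have "uminus ` uminus ` C = C" by (simp add: image_image)
  then have "y - x \<notin> C \<union> uminus ` C" using h by auto
  then show "t *\<^sub>R x + (1 - t) *\<^sub>R y \<in> S" using A x y h by blast
qed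

lemma upward_K0:
  assumes cone: "is_cone C" and up: "upward C S"
  shows "k \<in> K0 C \<Longrightarrow> s \<in> S \<Longrightarrow> s + k \<in> S"
proof (induct k arbitrary: s rule: K0.induct)
  case K0_zero then show ?case by simp
next
  case (K0_step c t k)
  have sk: "s + k \<in> S" using K0_step by blast
  show ?case
  proof (cases "t = 0")
    case True then show ?thesis using sk by simp
  next
    case False
    then have "t *\<^sub>R c \<in> C" using cone K0_step unfolding is_cone_def by auto
    then have "(s + k) + t *\<^sub>R c \<in> S" using up sk unfolding upward_def by blast
    then show ?thesis by (simp add: algebra_simps)
  qed
qed

lemma downward_K0:
  assumes cone: "is_cone C" and dn: "downward C S"
  shows "k \<in> K0 C \<Longrightarrow> s \<in> S \<Longrightarrow> s - k \<in> S"
proof (induct k arbitrary: s rule: K0.induct)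
  case K0_zero then show ?case by simp
next
  case (K0_step c t k)
  have sk: "s - k \<in> S" using K0_step by blast
  show ?case
  proof (cases "t = 0")
    case True then show ?thesis using sk by simp
  next
    case False
    then have "t *\<^sub>R c \<in> C" using cone K0_step unfolding is_cone_def by auto
    then have "(s - k) - t *\<^sub>R c \<in> S" using dn sk unfolding downward_def by blast
    then show ?thesis by (simp add: algebra_simps)
  qed
qed

lemma step_A:
  assumes ac: "antichain_convex C S" and a: "a \<in> S" and b: "b \<in> S"
    and u: "0 \<le> u" "0 \<le> v" "u + v = 1"
  shows "\<exists>s\<in>S. u *\<^sub>R a + v *\<^sub>R b - s \<in> K0 C"
proof (cases "b - a \<in> C")
  case True
  have "u *\<^sub>R a + v *\<^sub>R b - a = v *\<^sub>R (b - a)"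
  proof -
    have e: "u *\<^sub>R a + v *\<^sub>R a = a" using u by (simp flip: scaleR_add_left)
    have "u *\<^sub>R a + v *\<^sub>R b - a = u *\<^sub>R a + v *\<^sub>R b - (u *\<^sub>R a + v *\<^sub>R a)"
      using e by simp
    also have "\<dots> = v *\<^sub>R (b - a)" by (simp add: algebra_simps)
    finally show ?thesis .
  qed
  then show ?thesis using a K0_gen[OF True u(2)] by (intro bexI[of _ a]) simp_all
next
  case F: False
  show ?thesis
  proof (cases "b - a \<in> uminus ` C")
    case True
    then obtain c where c: "c \<in> C" "b - a = - c" by blast
    have "a - b = - (b - a)" by simp
    then have "a - b = c" using c(2) by simp
    then have ab: "a - b \<in> C" using c(1) by simp
    have "u *\<^sub>R a + v *\<^sub>R b - b = u *\<^sub>R (a - b)"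
  proof -
    have e: "u *\<^sub>R b + v *\<^sub>R b = b" using u by (simp flip: scaleR_add_left)
    have "u *\<^sub>R a + v *\<^sub>R b - b = u *\<^sub>R a + v *\<^sub>R b - (u *\<^sub>R b + v *\<^sub>R b)"
      using e by simp
    also have "\<dots> = u *\<^sub>R (a - b)" by (simp add: algebra_simps)
    finally show ?thesis .
  qed
    then show ?thesis using b K0_gen[OF ab u(1)] by (intro bexI[of _ b]) simp_all
  next
    case False
    have v: "v = 1 - u" using u by simp
    have "b - a \<notin> C \<union> uminus ` C" using F False by blast
    moreover have "u \<le> 1" using u by simp
    moreover have H: "\<And>x y t. x \<in> S \<Longrightarrow> y \<in> S \<Longrightarrow> 0 \<le> t \<and> t \<le> 1 \<and> y - x \<notin> C \<union> uminus ` C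
        \<Longrightarrow> t *\<^sub>R x + (1 - t) *\<^sub>R y \<in> S"
      using ac unfolding antichain_convex_def by blast
    ultimately have "u *\<^sub>R a + (1 - u) *\<^sub>R b \<in> S"
      using H[OF a b] u(1) by blast
    then have "u *\<^sub>R a + v *\<^sub>R b \<in> S" using v by simp
    moreover have "u *\<^sub>R a + v *\<^sub>R b - (u *\<^sub>R a + v *\<^sub>R b) \<in> K0 C"
      using K0_zero by simp
    ultimately show ?thesis by blast
  qed
qed

lemma hull_fin:
  assumes ac: "antichain_convex C S"
  shows "finite T \<Longrightarrow> T \<subseteq> S \<Longrightarrow> z \<in> convex hull T \<Longrightarrow> \<exists>s\<in>S. z - s \<in> K0 C"
proof (induct T arbitrary: z rule: finite_induct)
  case empty then show ?case by simp
next
  case (insert a T)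
  show ?case
  proof (cases "T = {}")
    case True
    then have "z = a" using insert by simp
    then show ?thesis using insert K0_zero by force
  next
    case False
    then obtain u v b where uv: "0 \<le> u" "0 \<le> v" "u + v = 1" "b \<in> convex hull T"
      "z = u *\<^sub>R a + v *\<^sub>R b"
      using insert(5) convex_hull_insert[OF False] by blast
    obtain s' where s': "s' \<in> S" "b - s' \<in> K0 C" using insert uv by blast
    obtain s'' where s'': "s'' \<in> S" "u *\<^sub>R a + v *\<^sub>R s' - s'' \<in> K0 C"
      using step_A[OF ac _ s'(1) uv(1-3), of a] insert by blast
    have "z - s'' = (u *\<^sub>R a + v *\<^sub>R s' - s'') + v *\<^sub>R (b - s')"
      using uv by (simp add: algebra_simps)
    moreover have "v *\<^sub>R (b - s') \<in> K0 C"
    proof -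
      have "\<And>k. k \<in> K0 C \<Longrightarrow> v *\<^sub>R k \<in> K0 C"
      proof -
        fix k assume "k \<in> K0 C"
        then show "v *\<^sub>R k \<in> K0 C"
        proof (induct k rule: K0.induct)
          case K0_zero then show ?case by (simp add: K0.K0_zero)
        next
          case (K0_step c t k)
          then have "(v * t) *\<^sub>R c + v *\<^sub>R k \<in> K0 C" using uv by (intro K0.K0_step) auto
          then show ?case by (simp add: scaleR_add_right)
        qed
      qed
      then show ?thesis using s' by blast
    qed
    ultimately show ?thesis using s'' K0_add by metis
  qed
qed

lemma hull_B:
  assumes ac: "antichain_convex C S" and z: "z \<in> convex hull S"
  shows "\<exists>s\<in>S. z - s \<in> K0 C"
proof -
  obtain T u where T: "finite T" "T \<subseteq> S" "\<forall>x\<in>T. 0 \<le> u x" "sum u T = 1"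
    "sum (\<lambda>v. u v *\<^sub>R v) T = z"
    using z unfolding convex_hull_explicit by blast
  have "z \<in> convex hull T"
    using T(5) convex_sum[OF T(1) convex_convex_hull T(4), of "\<lambda>v. v" T] T(3) hull_inc[of _ T]
    by auto
  then show ?thesis using hull_fin[OF ac T(1,2)] by blast
qed

lemma ms_0: "minkowski_sum A 0 = {0}"
  unfolding minkowski_sum_def by auto

lemma ms_Suc: "minkowski_sum A (Suc k) = minkowski_sum A k + A (Suc k)"
proof (intro set_eqI iffI)
  fix x assume "x \<in> minkowski_sum A (Suc k)"
  then obtain a where a: "x = (\<Sum>i\<in>{1..Suc k}. a i)" "\<forall>i\<in>{1..Suc k}. a i \<in> A i"
    unfolding minkowski_sum_def by blast
  have "x = (\<Sum>i\<in>{1..k}. a i) + a (Suc k)" using a(1) by simp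
  moreover have "(\<Sum>i\<in>{1..k}. a i) \<in> minkowski_sum A k"
    using a(2) unfolding minkowski_sum_def by auto
  moreover have "a (Suc k) \<in> A (Suc k)" using a(2) by simp
  ultimately show "x \<in> minkowski_sum A k + A (Suc k)" by (auto intro: set_plus_intro)
next
  fix x assume "x \<in> minkowski_sum A k + A (Suc k)"
  then obtain p y where py: "x = p + y" "p \<in> minkowski_sum A k" "y \<in> A (Suc k)"
    by (auto elim: set_plus_elim)
  then obtain a where a: "p = (\<Sum>i\<in>{1..k}. a i)" "\<forall>i\<in>{1..k}. a i \<in> A i"
    unfolding minkowski_sum_def by blast
  define a' where "a' = a(Suc k := y)"
  have "(\<Sum>i\<in>{1..k}. a' i) = p" unfolding a'_def a(1) by (intro sum.cong) auto
  then have "x = (\<Sum>i\<in>{1..Suc k}. a' i)" using py by (simp add: a'_def)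
  moreover have "\<forall>i\<in>{1..Suc k}. a' i \<in> A i" using a py unfolding a'_def
    by (auto simp: le_Suc_eq)
  ultimately show "x \<in> minkowski_sum A (Suc k)" unfolding minkowski_sum_def by blast
qed

lemma hull_C:
  "(\<forall>i\<in>{1..k}. antichain_convex C (A i)) \<Longrightarrow> z \<in> convex hull (minkowski_sum A k)
   \<Longrightarrow> \<exists>x\<in>minkowski_sum A k. z - x \<in> K0 C"
proof (induct k arbitrary: z)
  case 0 then show ?case by (simp add: ms_0 K0_zero)
next
  case (Suc k)
  have "z \<in> convex hull (minkowski_sum A k) + convex hull (A (Suc k))"
    using Suc(3) by (simp add: ms_Suc convex_hull_set_plus)
  then obtain p q where pq: "z = p + q" "p \<in> convex hull (minkowski_sum A k)"
    "q \<in> convex hull (A (Suc k))" by (auto elim: set_plus_elim)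
  obtain x where x: "x \<in> minkowski_sum A k" "p - x \<in> K0 C" using Suc pq by auto
  have acS: "antichain_convex C (A (Suc k))" using Suc(2) by simp
  obtain s where s: "s \<in> A (Suc k)" "q - s \<in> K0 C"
    using hull_B[OF acS pq(3)] by blast
  have "x + s \<in> minkowski_sum A (Suc k)" using x s by (simp add: ms_Suc set_plus_intro)
  moreover have "z - (x + s) = (p - x) + (q - s)" using pq by (simp add: algebra_simps)
  ultimately show ?case using K0_add x s by metis
qed

lemma ac_all_neg: "\<forall>i\<in>{1..k}. antichain_convex C (A i) \<Longrightarrow>
  \<forall>i\<in>{1..k}. antichain_convex (uminus ` C) (A i)"
  using ac_neg by blast

lemma ms_modify:
  assumes m: "m \<ge> 1" and x: "x \<in> minkowski_sum A m"
    and h: "\<And>s. s \<in> A 1 \<Longrightarrow> f s \<in> A 1"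
  shows "\<exists>s\<in>A 1. x - s + f s \<in> minkowski_sum A m"
proof -
  obtain a where a: "x = (\<Sum>i\<in>{1..m}. a i)" "\<forall>i\<in>{1..m}. a i \<in> A i"
    using x unfolding minkowski_sum_def by blast
  have one: "1 \<in> {1..m}" using m by simp
  define a' where "a' = a(1 := f (a 1))"
  have "(\<Sum>i\<in>{1..m}. a' i) = a' 1 + (\<Sum>i\<in>{1..m} - {1}. a' i)"
    using sum.remove[OF _ one] by simp
  also have "(\<Sum>i\<in>{1..m} - {1}. a' i) = (\<Sum>i\<in>{1..m} - {1}. a i)"
    unfolding a'_def by (intro sum.cong) auto
  also have "(\<Sum>i\<in>{1..m} - {1}. a i) = x - a 1"
    using sum.remove[OF _ one, of a] a(1) by simp
  finally have "(\<Sum>i\<in>{1..m}. a' i) = x - a 1 + f (a 1)" by (simp add: a'_def)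
  moreover have "\<forall>i\<in>{1..m}. a' i \<in> A i" using a h one unfolding a'_def by auto
  ultimately have "x - a 1 + f (a 1) = (\<Sum>i\<in>{1..m}. a' i) \<and> (\<forall>i\<in>{1..m}. a' i \<in> A i)"
    by simp
  then have "x - a 1 + f (a 1) \<in> minkowski_sum A m"
    unfolding minkowski_sum_def by blast
  then show ?thesis using a(2) one by blast
qed

theorem corollary1:
  fixes C :: "'a::real_vector set"
    and Xs Ys :: "nat \<Rightarrow> 'a set"
    and m n :: nat
  assumes "is_cone C"
    and "m \<ge> 1" and "n \<ge> 1"
    and "\<forall>i\<in>{1..m}. antichain_convex C (Xs i)"
    and "\<forall>j\<in>{1..n}. antichain_convex C (Ys j)"
    and "minkowski_sum Xs m \<inter> minkowski_sum Ys n = {}"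
  shows "(upward C (Xs 1) \<longrightarrow>
            convex hull (minkowski_sum Xs m) \<inter> convex hull (minkowski_sum Ys n) = {})
       \<and> (downward C (Xs 1) \<longrightarrow>
            convex hull (minkowski_sum Xs m) \<inter> convex hull (minkowski_sum Ys n) = {})"
proof (intro conjI impI)
  assume up: "upward C (Xs 1)"
  show "convex hull (minkowski_sum Xs m) \<inter> convex hull (minkowski_sum Ys n) = {}"
  proof (rule ccontr)
    assume "\<not> ?thesis"
    then obtain z where z: "z \<in> convex hull (minkowski_sum Xs m)"
      "z \<in> convex hull (minkowski_sum Ys n)" by blast
    obtain x where x: "x \<in> minkowski_sum Xs m" "z - x \<in> K0 C"
      using hull_C[OF assms(4) z(1)] by blast
    obtain y where y: "y \<in> minkowski_sum Ys n" "z - y \<in> K0 (uminus ` C)"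
      using hull_C[OF ac_all_neg[OF assms(5)] z(2)] by blast
    have k: "y - x \<in> K0 C"
      using K0_add[OF x(2) K0_neg[OF y(2)]] by (simp add: algebra_simps)
    obtain s where "s \<in> Xs 1" "x - s + (s + (y - x)) \<in> minkowski_sum Xs m"
      using ms_modify[OF assms(2) x(1), of "\<lambda>s. s + (y - x)"]
        upward_K0[OF assms(1) up k] by blast
    then have "y \<in> minkowski_sum Xs m" by simp
    then show False using y assms(6) by blast
  qed
next
  assume dn: "downward C (Xs 1)"
  show "convex hull (minkowski_sum Xs m) \<inter> convex hull (minkowski_sum Ys n) = {}"
  proof (rule ccontr)
    assume "\<not> ?thesis"
    then obtain z where z: "z \<in> convex hull (minkowski_sum Xs m)"
      "z \<in> convex hull (minkowski_sum Ys n)" by blast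
    obtain x where x: "x \<in> minkowski_sum Xs m" "z - x \<in> K0 (uminus ` C)"
      using hull_C[OF ac_all_neg[OF assms(4)] z(1)] by blast
    obtain y where y: "y \<in> minkowski_sum Ys n" "z - y \<in> K0 C"
      using hull_C[OF assms(5) z(2)] by blast
    have k: "x - y \<in> K0 C"
      using K0_add[OF y(2) K0_neg[OF x(2)]] by (simp add: algebra_simps)
    obtain s where "s \<in> Xs 1" "x - s + (s - (x - y)) \<in> minkowski_sum Xs m"
      using ms_modify[OF assms(2) x(1), of "\<lambda>s. s - (x - y)"]
        downward_K0[OF assms(1) dn k] by blast
    then have "y \<in> minkowski_sum Xs m" by simp
    then show False using y assms(6) by blast
  qed
qed

end
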